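(* Let $n\ge 2$ and let $G=K_n$ on vertices $v_1,\dots,v_n$ with edge weights $w_{\{i,j\}}\in(0,1)$. Then $\operatorname{eptw}(G)=\frac{1}{1-W}$, where $W=\min_{1\le i\le n}\prod_{j\ne i}(1-w_{\{i,j\}})$.
   Context: Let $G$ be a finite simple graph in which each edge $uv$ has a weight $w_{uv}\in(0,1)$. Weighted zero forcing: start with a set $B\subseteq V(G)$ of blue vertices, all other vertices white. In each round, simultaneously, for every blue vertex $u$ that has exactly one white neighbor $v$ (with respect to the coloring at the start of the round), $u$ attempts to force $v$, succeeding with probability $w_{uv}$, all attempts being independent; a white vertex becomes blue at the end of the round if at least one attempt on it succeeds. $B$ is a weighted zero forcing set of $G$ if this process can eventually color all of $V(G)$ blue (equivalently, $B$ is a zero forcing set of the underlying unweighted graph under the standard rule); $\operatorname{Z}(G)$ is the minimum size of such a set. $\operatorname{ptw}(G,B)$ is the random variable giving the round in which the last white vertex becomes blue ($0$ if $B=V(G)$); $\operatorname{eptw}(G,B)=\mathbb{E}[\operatorname{ptw}(G,B)]$; $\operatorname{eptw}(G)=\min\{\operatorname{eptw}(G,B): B$ a weighted zero forcing set with $|B|=\operatorname{Z}(G)\}$. *)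

theory Defs
  imports "HOL-Probability.Probability"
begin

text \<open>A finite simple graph is given by a finite vertex set V and a symmetric,
irreflexive adjacency relation E; only neighbours inside V are considered.
Edge weights are given by a symmetric function w.\<close>

definition white_nbrs :: "'a set \<Rightarrow> ('a \<Rightarrow> 'a \<Rightarrow> bool) \<Rightarrow> 'a set \<Rightarrow> 'a \<Rightarrow> 'a set" where
  "white_nbrs V E S u = {x \<in> V. E u x \<and> x \<notin> S}"

definition zf_step :: "'a set \<Rightarrow> ('a \<Rightarrow> 'a \<Rightarrow> bool) \<Rightarrow> 'a set \<Rightarrow> 'a set" where
  "zf_step V E S = S \<union> {v. \<exists>u\<in>S. white_nbrs V E S u = {v}}"

definition is_zf_set :: "'a set \<Rightarrow> ('a \<Rightarrow> 'a \<Rightarrow> bool) \<Rightarrow> 'a set \<Rightarrow> bool" where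
  "is_zf_set V E B \<longleftrightarrow> B \<subseteq> V \<and> (\<exists>k. (zf_step V E ^^ k) B = V)"

definition zf_number :: "'a set \<Rightarrow> ('a \<Rightarrow> 'a \<Rightarrow> bool) \<Rightarrow> nat" where
  "zf_number V E = Min (card ` {B. is_zf_set V E B})"

definition attempts :: "'a set \<Rightarrow> ('a \<Rightarrow> 'a \<Rightarrow> bool) \<Rightarrow> 'a set \<Rightarrow> ('a \<times> 'a) set" where
  "attempts V E S = {(u, v). u \<in> S \<and> white_nbrs V E S u = {v}}"

definition wstep :: "'a set \<Rightarrow> ('a \<Rightarrow> 'a \<Rightarrow> bool) \<Rightarrow> ('a \<Rightarrow> 'a \<Rightarrow> real) \<Rightarrow> 'a set \<Rightarrow> 'a set pmf" where
  "wstep V E w S =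
     map_pmf (\<lambda>f. S \<union> {v. \<exists>u. (u, v) \<in> attempts V E S \<and> f (u, v)})
       (Pi_pmf (attempts V E S) False (\<lambda>(u, v). bernoulli_pmf (w u v)))"

fun wstate :: "'a set \<Rightarrow> ('a \<Rightarrow> 'a \<Rightarrow> bool) \<Rightarrow> ('a \<Rightarrow> 'a \<Rightarrow> real) \<Rightarrow> 'a set \<Rightarrow> nat \<Rightarrow> 'a set pmf" where
  "wstate V E w B 0 = return_pmf B"
| "wstate V E w B (Suc k) = bind_pmf (wstate V E w B k) (wstep V E w)"

text \<open>Probability that ptw(G,B) = k: for k = 0 this means B = V; for k \<ge> 1 it means
not all vertices are blue at the end of round k-1 but all are blue at the end of round k
(joint distribution of the blue sets after rounds k-1 and k).\<close>

definition ptw_prob :: "'a set \<Rightarrow> ('a \<Rightarrow> 'a \<Rightarrow> bool) \<Rightarrow> ('a \<Rightarrow> 'a \<Rightarrow> real) \<Rightarrow> 'a set \<Rightarrow> nat \<Rightarrow> real" where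
  "ptw_prob V E w B k =
     (if k = 0 then (if B = V then 1 else 0)
      else measure_pmf.prob
             (bind_pmf (wstate V E w B (k - 1)) (\<lambda>S. map_pmf (Pair S) (wstep V E w S)))
             {(S, T). S \<noteq> V \<and> T = V})"

definition eptw_set :: "'a set \<Rightarrow> ('a \<Rightarrow> 'a \<Rightarrow> bool) \<Rightarrow> ('a \<Rightarrow> 'a \<Rightarrow> real) \<Rightarrow> 'a set \<Rightarrow> real" where
  "eptw_set V E w B = (\<Sum>k. real k * ptw_prob V E w B k)"

definition eptw :: "'a set \<Rightarrow> ('a \<Rightarrow> 'a \<Rightarrow> bool) \<Rightarrow> ('a \<Rightarrow> 'a \<Rightarrow> real) \<Rightarrow> real" where
  "eptw V E w = Min (eptw_set V E w ` {B. is_zf_set V E B \<and> card B = zf_number V E})"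

end

theory Submission
  imports Defs
begin



lemma bern_bind:
  assumes "0 \<le> q" "q \<le> 1" "0 \<le> P" "P \<le> 1"
  shows "bind_pmf (bernoulli_pmf q) (\<lambda>b. bernoulli_pmf (if b then P else 0)) = bernoulli_pmf (q*P)"
proof (rule pmf_eqI)
  fix x :: bool
  have qP: "0 \<le> q*P" "q*P \<le> 1" using assms by (auto simp: mult_le_one)
  show "pmf (bind_pmf (bernoulli_pmf q) (\<lambda>b. bernoulli_pmf (if b then P else 0))) x = pmf (bernoulli_pmf (q*P)) x"
    using assms qP by (cases x) (simp_all add: pmf_bind algebra_simps)
qed

lemma all_false:
  assumes "finite A"
  shows "map_pmf (\<lambda>f. \<forall>a\<in>A. \<not> f a) (Pi_pmf A False p) = bernoulli_pmf (\<Prod>a\<in>A. pmf (p a) False)"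
proof -
  let ?P = "\<Prod>a\<in>A. pmf (p a) False"
  have P: "0 \<le> ?P" "?P \<le> 1" by (auto intro: prod_nonneg prod_le_1 pmf_le_1)
  have T: "pmf (map_pmf (\<lambda>f. \<forall>a\<in>A. \<not> f a) (Pi_pmf A False p)) True = ?P"
  proof -
    have "(\<lambda>f. \<forall>a\<in>A. \<not> f a) -` {True} = Pi A (\<lambda>_. {False})" by auto
    then show ?thesis using assms by (simp add: pmf_map measure_Pi_pmf_Pi measure_pmf_single)
  qed
  show ?thesis
  proof (rule pmf_eqI)
    fix x :: bool
    show "pmf (map_pmf (\<lambda>f. \<forall>a\<in>A. \<not> f a) (Pi_pmf A False p)) x = pmf (bernoulli_pmf ?P) x"
      using T P by (cases x) (simp_all add: pmf_False_conv_True[of "map_pmf _ _"])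
  qed
qed




lemma bern0: "bernoulli_pmf 0 = return_pmf False"
  by (rule pmf_eqI) (case_tac i, auto)
lemma bern1: "bernoulli_pmf 1 = return_pmf True"
  by (rule pmf_eqI) (case_tac i, auto)

lemma wn: "u \<in> S \<Longrightarrow> white_nbrs V (\<lambda>i j. i \<noteq> j) S u = V - S"
  by (auto simp: white_nbrs_def)

lemma att_full: "attempts V (\<lambda>i j. i \<noteq> j) V = {}"
  unfolding attempts_def by (simp add: wn)

lemma att_one: "i \<in> V \<Longrightarrow> attempts V (\<lambda>i j. i \<noteq> j) (V - {i}) = (V - {i}) \<times> {i}"
proof -
  assume i: "i \<in> V"
  have d: "V - (V - {i}) = {i}" using i by blast
  have h: "white_nbrs V (\<lambda>i j. i \<noteq> j) (V - {i}) u = {i}" if "u \<in> V - {i}" for u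
    by (simp only: wn[OF that] d)
  show ?thesis unfolding attempts_def using h by blast
qed

lemma wstep_full: "wstep V (\<lambda>i j. i \<noteq> j) w V = return_pmf V"
  by (simp add: wstep_def att_full map_return_pmf)

lemma wstep_one:
  assumes fin: "finite V" and i: "i \<in> V"
    and wb: "\<forall>u\<in>V - {i}. 0 \<le> w u i \<and> w u i \<le> 1"
  shows "wstep V (\<lambda>i j. i \<noteq> j) w (V - {i}) =
    map_pmf (\<lambda>b. if b then V - {i} else V) (bernoulli_pmf (\<Prod>u\<in>V-{i}. 1 - w u i))"
proof -
  let ?S = "V - {i}"
  let ?A = "?S \<times> {i}"
  let ?p = "(\<lambda>(u, v). bernoulli_pmf (w u v))"
  have F: "(\<lambda>f. ?S \<union> {v. \<exists>u. (u, v) \<in> ?A \<and> f (u, v)}) =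
           (\<lambda>f. (\<lambda>b. if b then ?S else V) (\<forall>a\<in>?A. \<not> f a))"
    using i by (intro ext) auto
  have pr: "(\<Prod>a\<in>?A. pmf (?p a) False) = (\<Prod>u\<in>?S. 1 - w u i)"
  proof -
    have "?A = (\<lambda>u. (u, i)) ` ?S" by auto
    then have "(\<Prod>a\<in>?A. pmf (?p a) False) = (\<Prod>u\<in>?S. pmf (?p (u,i)) False)"
      by (simp add: prod.reindex inj_on_def)
    also have "\<dots> = (\<Prod>u\<in>?S. 1 - w u i)"
      by (rule prod.cong) (use wb in auto)
    finally show ?thesis .
  qed
  have "wstep V (\<lambda>i j. i \<noteq> j) w ?S = map_pmf (\<lambda>f. (\<lambda>b. if b then ?S else V) (\<forall>a\<in>?A. \<not> f a)) (Pi_pmf ?A False ?p)"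
    unfolding wstep_def att_one[OF i] F by simp
  also have "\<dots> = map_pmf (\<lambda>b. if b then ?S else V) (map_pmf (\<lambda>f. \<forall>a\<in>?A. \<not> f a) (Pi_pmf ?A False ?p))"
    by (simp add: map_pmf_comp)
  also have "\<dots> = map_pmf (\<lambda>b. if b then ?S else V) (bernoulli_pmf (\<Prod>u\<in>?S. 1 - w u i))"
    using fin by (subst all_false) (simp_all only: pr finite_SigmaI finite_Diff finite.intros)
  finally show ?thesis .
qed


lemma Pbnd:
  assumes "\<forall>u\<in>A. 0 \<le> f u \<and> f u \<le> (1::real)"
  shows "0 \<le> (\<Prod>u\<in>A. 1 - f u)" "(\<Prod>u\<in>A. 1 - f u) \<le> 1"
proof -
  have h: "\<And>u. u \<in> A \<Longrightarrow> 0 \<le> 1 - f u \<and> 1 - f u \<le> 1" using assms by simp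
  show "0 \<le> (\<Prod>u\<in>A. 1 - f u)" by (rule prod_nonneg) (use h in blast)
  show "(\<Prod>u\<in>A. 1 - f u) \<le> 1" by (rule prod_le_1) (use h in blast)
qed

lemma Pkbnd: "0 \<le> (P::real) \<Longrightarrow> P \<le> 1 \<Longrightarrow> 0 \<le> P^k \<and> P^k \<le> 1"
  by (simp add: power_le_one)




lemma wstate_one:
  assumes fin: "finite V" and i: "i \<in> V"
    and wb: "\<forall>u\<in>V - {i}. 0 \<le> w u i \<and> w u i \<le> 1"
  shows "wstate V (\<lambda>i j. i \<noteq> j) w (V - {i}) k =
    map_pmf (\<lambda>b. if b then V - {i} else V) (bernoulli_pmf ((\<Prod>u\<in>V-{i}. 1 - w u i) ^ k))"
proof (induction k)
  case 0
  then show ?case by (simp only: wstate.simps power_0 bern1 map_return_pmf if_True)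
next
  case (Suc k)
  let ?P = "\<Prod>u\<in>V-{i}. 1 - w u i"
  let ?g = "\<lambda>b. if b then V - {i} else V"
  have P: "0 \<le> ?P" "?P \<le> 1" using Pbnd[of "V - {i}" "\<lambda>u. w u i", OF wb] by blast+
  have Pk: "0 \<le> ?P^k" "?P^k \<le> 1" using Pkbnd[OF P(1) P(2), of k] by blast+
  have "wstate V (\<lambda>i j. i \<noteq> j) w (V - {i}) (Suc k) =
     bind_pmf (bernoulli_pmf (?P^k)) (\<lambda>b. wstep V (\<lambda>i j. i \<noteq> j) w (?g b))"
    by (simp only: wstate.simps Suc bind_map_pmf)
  also have "\<dots> = bind_pmf (bernoulli_pmf (?P^k)) (\<lambda>b. map_pmf ?g (bernoulli_pmf (if b then ?P else 0)))"
    apply (rule bind_pmf_cong[OF refl])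
    subgoal for b by (cases b) (simp_all only: if_True if_False wstep_one[where w=w, OF fin i wb] wstep_full bern0 map_return_pmf)
    done
  also have "\<dots> = map_pmf ?g (bind_pmf (bernoulli_pmf (?P^k)) (\<lambda>b. bernoulli_pmf (if b then ?P else 0)))"
    by (simp only: map_bind_pmf)
  also have "\<dots> = map_pmf ?g (bernoulli_pmf (?P^Suc k))"
    using P Pk by (simp only: bern_bind power_Suc mult.commute)
  finally show ?case .
qed

lemma ptw_one:
  assumes fin: "finite V" and i: "i \<in> V"
    and wb: "\<forall>u\<in>V - {i}. 0 \<le> w u i \<and> w u i \<le> 1"
  shows "ptw_prob V (\<lambda>i j. i \<noteq> j) w (V - {i}) (Suc m) =
     (\<Prod>u\<in>V-{i}. 1 - w u i) ^ m * (1 - (\<Prod>u\<in>V-{i}. 1 - w u i))"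
proof -
  let ?P = "\<Prod>u\<in>V-{i}. 1 - w u i"
  let ?g = "\<lambda>b. if b then V - {i} else V"
  let ?E = "\<lambda>i j. i \<noteq> j"
  let ?A = "{(S, T). S \<noteq> V \<and> T = V}"
  let ?F = "\<lambda>S. map_pmf (Pair S) (wstep V ?E w S)"
  have P: "0 \<le> ?P" "?P \<le> 1" using Pbnd[of "V - {i}" "\<lambda>u. w u i", OF wb] by blast+
  have Pk: "0 \<le> ?P^m" "?P^m \<le> 1" using Pkbnd[OF P(1) P(2), of m] by blast+
  have ne: "V - {i} \<noteq> V" using i by auto
  have eT: "emeasure (measure_pmf (?F (V - {i}))) ?A = ennreal (1 - ?P)"
  proof -
    have pre: "(\<lambda>b. (V - {i}, ?g b)) -` ?A = {False}" using ne by auto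
    have "emeasure (measure_pmf (?F (V - {i}))) ?A
        = emeasure (measure_pmf (map_pmf (\<lambda>b. (V - {i}, ?g b)) (bernoulli_pmf ?P))) ?A"
      by (simp only: wstep_one[where w=w, OF fin i wb] map_pmf_comp)
    also have "\<dots> = ennreal (measure_pmf.prob (bernoulli_pmf ?P) ((\<lambda>b. (V - {i}, ?g b)) -` ?A))"
      by (simp only: measure_pmf.emeasure_eq_measure measure_map_pmf)
    also have "\<dots> = ennreal (1 - ?P)"
      unfolding pre using P by (simp add: measure_pmf_single)
    finally show ?thesis .
  qed
  have eF: "emeasure (measure_pmf (?F V)) ?A = 0"
    by (simp add: wstep_full map_return_pmf)
  have "emeasure (measure_pmf (bind_pmf (wstate V ?E w (V - {i}) m) ?F)) ?A
     = (\<integral>\<^sup>+b. emeasure (measure_pmf (?F (?g b))) ?A \<partial>measure_pmf (bernoulli_pmf (?P^m)))"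
    by (simp only: wstate_one[where w=w, OF fin i wb] bind_map_pmf emeasure_bind_pmf)
  also have "\<dots> = emeasure (measure_pmf (?F (?g True))) ?A * ennreal (?P^m) + emeasure (measure_pmf (?F (?g False))) ?A * ennreal (1 - ?P^m)"
    by (rule nn_integral_bernoulli_pmf) (use Pk in auto)
  also have "\<dots> = ennreal (1 - ?P) * ennreal (?P^m)"
    by (simp only: if_True if_False eT eF mult_zero_left add_0_right)
  also have "\<dots> = ennreal ((1 - ?P) * ?P^m)"
    by (rule ennreal_mult[symmetric]) (use P Pk in auto)
  finally have "ennreal (measure_pmf.prob (bind_pmf (wstate V ?E w (V - {i}) m) ?F) ?A) = ennreal ((1 - ?P) * ?P^m)"
    by (simp only: measure_pmf.emeasure_eq_measure)
  then have "measure_pmf.prob (bind_pmf (wstate V ?E w (V - {i}) m) ?F) ?A = (1 - ?P) * ?P^m"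
    by (subst (asm) ennreal_inj) (use P Pk in auto)
  then show ?thesis by (simp add: ptw_prob_def mult.commute)
qed

lemma eptw_one:
  assumes fin: "finite V" and i: "i \<in> V"
    and wb: "\<forall>u\<in>V - {i}. 0 \<le> w u i \<and> w u i \<le> 1"
    and Plt: "(\<Prod>u\<in>V-{i}. 1 - w u i) < 1"
  shows "eptw_set V (\<lambda>i j. i \<noteq> j) w (V - {i}) = 1 / (1 - (\<Prod>u\<in>V-{i}. 1 - w u i))"
proof -
  let ?P = "\<Prod>u\<in>V-{i}. 1 - w u i"
  have P: "0 \<le> ?P" "?P \<le> 1" using Pbnd[of "V - {i}" "\<lambda>u. w u i", OF wb] by blast+
  have ne: "V - {i} \<noteq> V" using i by auto
  let ?f = "\<lambda>k. real k * ptw_prob V (\<lambda>i j. i \<noteq> j) w (V - {i}) k"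
  have "(\<lambda>n. of_nat (Suc n) * ?P ^ n) sums (1 / (1 - ?P)^2)"
    using P Plt by (intro geometric_deriv_sums) auto
  then have "(\<lambda>n. (1 - ?P) * (of_nat (Suc n) * ?P ^ n)) sums ((1 - ?P) * (1 / (1 - ?P)^2))"
    by (rule sums_mult)
  moreover have "(1 - ?P) * (1 / (1 - ?P)^2) = 1 / (1 - ?P)"
    using Plt by (simp add: power2_eq_square)
  moreover have "(\<lambda>n. (1 - ?P) * (of_nat (Suc n) * ?P ^ n)) = (\<lambda>n. ?f (Suc n))"
    by (rule ext) (simp only: ptw_one[where w=w, OF fin i wb] mult_ac)
  ultimately have "(\<lambda>n. ?f (Suc n)) sums (1 / (1 - ?P))" by simp
  then have "?f sums (1 / (1 - ?P) + ?f 0)" by (rule iffD1[OF sums_Suc_iff])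
  then have "?f sums (1 / (1 - ?P))" by simp
  then show ?thesis unfolding eptw_set_def by (rule sums_unique[symmetric])
qed




lemma zf_fix:
  assumes nv: "\<And>v. V - B \<noteq> {v}"
  shows "zf_step V (\<lambda>i j. i \<noteq> j) B = B"
proof -
  have "{v. \<exists>u\<in>B. white_nbrs V (\<lambda>i j. i \<noteq> j) B u = {v}} = {}"
  proof (rule equals0I)
    fix v assume "v \<in> {v. \<exists>u\<in>B. white_nbrs V (\<lambda>i j. i \<noteq> j) B u = {v}}"
    then obtain u where "u \<in> B" "white_nbrs V (\<lambda>i j. i \<noteq> j) B u = {v}" by blast
    then have "V - B = {v}" by (simp only: wn)
    then show False using nv by blast
  qed
  then show ?thesis unfolding zf_step_def by blast
qed

lemma funpow_fix: "f x = x \<Longrightarrow> (f ^^ j) x = x"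
  by (induction j) simp_all

lemma zf_char:
  assumes two: "\<And>i. i \<in> V \<Longrightarrow> \<exists>u\<in>V. u \<noteq> i"
  shows "is_zf_set V (\<lambda>i j. i \<noteq> j) B \<longleftrightarrow> B = V \<or> (\<exists>i\<in>V. B = V - {i})"
proof
  assume z: "is_zf_set V (\<lambda>i j. i \<noteq> j) B"
  then have sub: "B \<subseteq> V" unfolding is_zf_set_def by blast
  from z obtain k where k: "(zf_step V (\<lambda>i j. i \<noteq> j) ^^ k) B = V" unfolding is_zf_set_def by blast
  show "B = V \<or> (\<exists>i\<in>V. B = V - {i})"
  proof (rule ccontr)
    assume c: "\<not> (B = V \<or> (\<exists>i\<in>V. B = V - {i}))"
    have nv: "V - B \<noteq> {v}" for v
    proof
      assume h: "V - B = {v}"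
      then have "v \<in> V" by blast
      moreover have "B = V - {v}" using h sub by blast
      ultimately show False using c by blast
    qed
    have "(zf_step V (\<lambda>i j. i \<noteq> j) ^^ k) B = B"
      by (rule funpow_fix) (rule zf_fix[OF nv])
    then show False using k c by simp
  qed
next
  assume "B = V \<or> (\<exists>i\<in>V. B = V - {i})"
  then show "is_zf_set V (\<lambda>i j. i \<noteq> j) B"
  proof
    assume B: "B = V"
    have "(zf_step V (\<lambda>i j. i \<noteq> j) ^^ 0) B = V" using B by simp
    then show ?thesis unfolding is_zf_set_def using B by blast
  next
    assume "\<exists>i\<in>V. B = V - {i}"
    then obtain i where i: "i \<in> V" and B: "B = V - {i}" by blast
    obtain u where u: "u \<in> V" "u \<noteq> i" using two[OF i] by blast
    have d: "V - (V - {i}) = {i}" using i by blast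
    have "zf_step V (\<lambda>i j. i \<noteq> j) B = V"
    proof
      show "zf_step V (\<lambda>i j. i \<noteq> j) B \<subseteq> V"
        unfolding zf_step_def B using d wn[of _ "V - {i}" V] by blast
      have uS: "u \<in> V - {i}" using u by blast
      have "white_nbrs V (\<lambda>i j. i \<noteq> j) B u = {i}" unfolding B by (simp only: wn[OF uS] d)
      then have "i \<in> zf_step V (\<lambda>i j. i \<noteq> j) B" unfolding zf_step_def B using u by blast
      then show "V \<subseteq> zf_step V (\<lambda>i j. i \<noteq> j) B" unfolding zf_step_def B by blast
    qed
    then have "(zf_step V (\<lambda>i j. i \<noteq> j) ^^ 1) B = V" by simp
    then show ?thesis unfolding is_zf_set_def using B by blast
  qed
qed

lemma zf_opt:
  assumes fin: "finite V" and two: "\<And>i. i \<in> V \<Longrightarrow> \<exists>u\<in>V. u \<noteq> i"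
    and ne: "V \<noteq> {}"
  shows "{B. is_zf_set V (\<lambda>i j. i \<noteq> j) B \<and> card B = zf_number V (\<lambda>i j. i \<noteq> j)}
     = (\<lambda>i. V - {i}) ` V"
proof -
  have Z: "{B. is_zf_set V (\<lambda>i j. i \<noteq> j) B} = insert V ((\<lambda>i. V - {i}) ` V)"
    using zf_char[OF two] by blast
  have c: "card (V - {i}) = card V - 1" if "i \<in> V" for i using that fin by simp
  have "0 < card V" using ne fin by (simp add: card_gt_0_iff)
  then have cV: "card V \<noteq> card V - 1" by arith
  have "card ` {B. is_zf_set V (\<lambda>i j. i \<noteq> j) B} = {card V, card V - 1}"
    unfolding Z image_insert image_image using c ne by auto
  then have zn: "zf_number V (\<lambda>i j. i \<noteq> j) = card V - 1" unfolding zf_number_def by simp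
  show ?thesis unfolding zn
  proof
    show "{B. is_zf_set V (\<lambda>i j. i \<noteq> j) B \<and> card B = card V - 1} \<subseteq> (\<lambda>i. V - {i}) ` V"
    proof
      fix B assume "B \<in> {B. is_zf_set V (\<lambda>i j. i \<noteq> j) B \<and> card B = card V - 1}"
      then have zB: "is_zf_set V (\<lambda>i j. i \<noteq> j) B" and cB: "card B = card V - 1" by blast+
      have "B \<noteq> V" using cB cV by blast
      then show "B \<in> (\<lambda>i. V - {i}) ` V" using zB zf_char[OF two] by blast
    qed
    show "(\<lambda>i. V - {i}) ` V \<subseteq> {B. is_zf_set V (\<lambda>i j. i \<noteq> j) B \<and> card B = card V - 1}"
    proof
      fix B assume "B \<in> (\<lambda>i. V - {i}) ` V"
      then obtain i where i: "i \<in> V" and B: "B = V - {i}" by blast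
      have "is_zf_set V (\<lambda>i j. i \<noteq> j) B" using zf_char[OF two] i B by blast
      moreover have "card B = card V - 1" using c[OF i] B by simp
      ultimately show "B \<in> {B. is_zf_set V (\<lambda>i j. i \<noteq> j) B \<and> card B = card V - 1}" by blast
    qed
  qed
qed




theorem mainTheorem2:
  fixes n :: nat and w :: "nat \<Rightarrow> nat \<Rightarrow> real"
  assumes "n \<ge> 2"
    and "\<And>i j. i \<in> {1..n} \<Longrightarrow> j \<in> {1..n} \<Longrightarrow> i \<noteq> j \<Longrightarrow> w i j = w j i"
    and "\<And>i j. i \<in> {1..n} \<Longrightarrow> j \<in> {1..n} \<Longrightarrow> i \<noteq> j \<Longrightarrow> 0 < w i j \<and> w i j < 1"
  shows "eptw {1..n} (\<lambda>i j. i \<noteq> j) w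
           = 1 / (1 - Min ((\<lambda>i. \<Prod>j\<in>{1..n} - {i}. 1 - w i j) ` {1..n}))"
proof -
  let ?V = "{1..n}"
  define Q where "Q i = (\<Prod>j\<in>?V - {i}. 1 - w i j)" for i
  have fin: "finite ?V" by simp
  have ne: "?V \<noteq> {}" using assms(1) by auto
  have two: "\<exists>u\<in>?V. u \<noteq> i" if i: "i \<in> ?V" for i
  proof (cases "i = 1")
    case True then show ?thesis using assms(1) by (intro bexI[of _ 2]) auto
  next
    case False then show ?thesis using assms(1) by (intro bexI[of _ 1]) auto
  qed
  have wb: "\<forall>u\<in>?V - {i}. 0 \<le> w u i \<and> w u i \<le> 1" if "i \<in> ?V" for i
    using assms(3) that by (metis DiffE insertI1 less_imp_le)
  have PQ: "(\<Prod>u\<in>?V-{i}. 1 - w u i) = Q i" if "i \<in> ?V" for i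
    unfolding Q_def by (rule prod.cong) (use assms(2) that in auto)
  have Qb: "0 \<le> Q i \<and> Q i < 1" if i: "i \<in> ?V" for i
  proof -
    obtain j where j: "j \<in> ?V - {i}"
    proof (cases "i = 1")
      case True then show ?thesis using that[of 2] assms(1) by auto
    next
      case False then show ?thesis using that[of 1] assms(1) i by auto
    qed
    have wij: "0 < w i j" "w i j < 1" using assms(3)[of i j] i j by auto
    have r0: "0 \<le> (\<Prod>k\<in>?V - {i} - {j}. 1 - w i k)"
      by (rule prod_nonneg) (use assms(3) i in fastforce)
    have r1: "(\<Prod>k\<in>?V - {i} - {j}. 1 - w i k) \<le> 1"
      by (rule prod_le_1) (use assms(3) i in fastforce)
    have Qe: "Q i = (1 - w i j) * (\<Prod>k\<in>?V - {i} - {j}. 1 - w i k)"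
      unfolding Q_def using j by (subst prod.remove[of _ j]) auto
    have m: "(1 - w i j) * (\<Prod>k\<in>?V - {i} - {j}. 1 - w i k) \<le> 1 - w i j"
      by (rule mult_left_le) (use r1 wij in auto)
    have "0 \<le> (1 - w i j) * (\<Prod>k\<in>?V - {i} - {j}. 1 - w i k)"
      by (rule mult_nonneg_nonneg) (use r0 wij in auto)
    then show ?thesis using Qe m wij by linarith
  qed
  have "eptw ?V (\<lambda>i j. i \<noteq> j) w = Min (eptw_set ?V (\<lambda>i j. i \<noteq> j) w ` (\<lambda>i. ?V - {i}) ` ?V)"
  proof -
    have Z: "{B. is_zf_set ?V (\<lambda>i j. i \<noteq> j) B \<and> card B = zf_number ?V (\<lambda>i j. i \<noteq> j)} = (\<lambda>i. ?V - {i}) ` ?V"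
      by (rule zf_opt[OF fin two ne])
    show ?thesis unfolding eptw_def Z ..
  qed
  also have "eptw_set ?V (\<lambda>i j. i \<noteq> j) w ` (\<lambda>i. ?V - {i}) ` ?V = (\<lambda>i. 1 / (1 - Q i)) ` ?V"
    unfolding image_image
  proof (rule image_cong[OF refl])
    fix i assume i: "i \<in> ?V"
    show "eptw_set ?V (\<lambda>i j. i \<noteq> j) w (?V - {i}) = 1 / (1 - Q i)"
      using eptw_one[where w=w, OF fin i wb[OF i]] PQ[OF i] Qb[OF i] by simp
  qed
  also have "Min ((\<lambda>i. 1 / (1 - Q i)) ` ?V) = 1 / (1 - Min (Q ` ?V))"
  proof -
    have "Min (Q ` ?V) \<in> Q ` ?V" by (rule Min_in) (use ne in auto)
    then obtain i0 where i0: "i0 \<in> ?V" "Min (Q ` ?V) = Q i0" by blast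
    show ?thesis
    proof (rule Min_eqI)
      show "finite ((\<lambda>i. 1 / (1 - Q i)) ` ?V)" by simp
      show "1 / (1 - Min (Q ` ?V)) \<in> (\<lambda>i. 1 / (1 - Q i)) ` ?V" unfolding i0(2) using i0(1) by (rule imageI)
      fix y assume "y \<in> (\<lambda>i. 1 / (1 - Q i)) ` ?V"
      then obtain i where i: "i \<in> ?V" and y: "y = 1 / (1 - Q i)" by blast
      have "Min (Q ` ?V) \<le> Q i" by (rule Min_le) (use i in auto)
      then have le: "Q i0 \<le> Q i" unfolding i0(2) .
      show "1 / (1 - Min (Q ` ?V)) \<le> y"
        unfolding y i0(2) using le Qb[OF i] Qb[OF i0(1)]
        by (intro divide_left_mono) (auto intro: mult_pos_pos)
    qed
  qed
  finally show ?thesis unfolding Q_def .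
qed


end
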